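(* Let $\Lambda'$, $\Lambda\subset\Lambda'$ and $Z$ be as in the context. Suppose $V$ is a finitely generated $\Lambda'$-module on which $Z$ acts by a character $\omega_V$, and $\sigma$ is a simple $\Lambda'$-module such that $Z$ acts on $\sigma$ by $\omega_\sigma=\omega_V$. Then $V|_\Lambda$ is finitely generated, $\sigma|_\Lambda$ is simple, and $$[V:\sigma]=[V|_\Lambda:\sigma|_\Lambda],$$ where $[V:\sigma]$ denotes the multiplicity of $\sigma$ as a Jordan--Hölder factor of $V$ (and similarly over $\Lambda$).
   Context: Let $\mathbb{F}$ be a field of characteristic $p$, sufficiently large so that all simple modules considered are absolutely simple. $\Lambda'$ is an Artinian $\mathbb F$-algebra, $\Lambda\subset\Lambda'$ a subalgebra, and $Z$ a finite subgroup of the group of units of the center of $\Lambda'$, of order prime to $p$. Put $Y:=Z/(\Lambda\cap Z)$. It is assumed that $\Lambda'$ is a crossed product $\Lambda*Y$: there is a set $\widetilde Y=\{\widetilde y:y\in Y\}$ of units of $\Lambda'$ (the image of a set-theoretic section $Y\to Z$ sending $1$ to $1$) with $|\widetilde Y|=|Y|$, such that $\Lambda'$ is free as a left and as a right $\Lambda$-module with basis $\widetilde Y$, $\widetilde{1_Y}=1$, and for $y_1,y_2\in Y$, $\widetilde{y_1}\Lambda=\Lambda\widetilde{y_1}$ and $\widetilde{y_1}\widetilde{y_2}\Lambda=\widetilde{y_1y_2}\Lambda$. Modules are left modules. A simple $\Lambda'$-module has a central character on $Z$, denoted $\omega_\sigma$. *)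

theory Defs
  imports Main
begin

text \<open>Lambda' is the whole ring type 'a; its F-algebra structure is a ring homomorphism
  iota from the field type 'f into the centre of 'a.\<close>

definition alg_embedding :: "('f::field \<Rightarrow> 'a::ring_1) \<Rightarrow> bool" where
  "alg_embedding \<iota> \<longleftrightarrow> \<iota> 1 = 1 \<and> (\<forall>c d. \<iota> (c + d) = \<iota> c + \<iota> d) \<and>
     (\<forall>c d. \<iota> (c * d) = \<iota> c * \<iota> d) \<and> (\<forall>c a. \<iota> c * a = a * \<iota> c)"

definition subalgebra :: "('f::field \<Rightarrow> 'a::ring_1) \<Rightarrow> 'a set \<Rightarrow> bool" where
  "subalgebra \<iota> L \<longleftrightarrow> 1 \<in> L \<and> (\<forall>c. \<iota> c \<in> L) \<and> (\<forall>x\<in>L. \<forall>y\<in>L. x + y \<in> L \<and> x * y \<in> L)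
     \<and> (\<forall>x\<in>L. - x \<in> L)"

definition left_ideal :: "'a::ring_1 set \<Rightarrow> bool" where
  "left_ideal I \<longleftrightarrow> 0 \<in> I \<and> (\<forall>x\<in>I. \<forall>y\<in>I. x + y \<in> I) \<and> (\<forall>x\<in>I. - x \<in> I)
     \<and> (\<forall>a. \<forall>x\<in>I. a * x \<in> I)"

definition left_artinian :: "'a::ring_1 itself \<Rightarrow> bool" where
  "left_artinian _ \<longleftrightarrow> \<not> (\<exists>f :: nat \<Rightarrow> 'a set. \<forall>n. left_ideal (f n) \<and> f (Suc n) \<subset> f n)"

definition central_unit_subgroup :: "'a::ring_1 set \<Rightarrow> bool" where
  "central_unit_subgroup Z \<longleftrightarrow> finite Z \<and> 1 \<in> Z \<and> (\<forall>z\<in>Z. \<forall>w\<in>Z. z * w \<in> Z) \<and>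
     (\<forall>z\<in>Z. (\<forall>a. z * a = a * z) \<and> (\<exists>w\<in>Z. z * w = 1))"

definition ycoset :: "'a::ring_1 set \<Rightarrow> 'a set \<Rightarrow> 'a \<Rightarrow> 'a set" where
  "ycoset L Z z = (\<lambda>w. z * w) ` (L \<inter> Z)"

definition Yq :: "'a::ring_1 set \<Rightarrow> 'a set \<Rightarrow> 'a set set" where
  "Yq L Z = ycoset L Z ` Z"

definition ymul :: "'a::ring_1 set \<Rightarrow> 'a set \<Rightarrow> ('a set \<Rightarrow> 'a) \<Rightarrow> 'a set \<Rightarrow> 'a set \<Rightarrow> 'a set" where
  "ymul L Z sec y1 y2 = ycoset L Z (sec y1 * sec y2)"

text \<open>sec is a set-theoretic section Y -> Z of the quotient map, with sec 1 = 1; its image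
  Ytilde is a basis of Lambda' as a free left and as a free right Lambda-module, etc.\<close>
definition crossed_product :: "'a::ring_1 set \<Rightarrow> 'a set \<Rightarrow> ('a set \<Rightarrow> 'a) \<Rightarrow> bool" where
  "crossed_product L Z sec \<longleftrightarrow>
     (\<forall>y\<in>Yq L Z. sec y \<in> y) \<and> sec (ycoset L Z 1) = 1 \<and>
     card (sec ` Yq L Z) = card (Yq L Z) \<and>
     (\<forall>x. \<exists>!c. (\<forall>t. t \<notin> sec ` Yq L Z \<longrightarrow> c t = 0) \<and> (\<forall>t\<in>sec ` Yq L Z. c t \<in> L) \<and>
            x = (\<Sum>t\<in>sec ` Yq L Z. c t * t)) \<and>
     (\<forall>x. \<exists>!c. (\<forall>t. t \<notin> sec ` Yq L Z \<longrightarrow> c t = 0) \<and> (\<forall>t\<in>sec ` Yq L Z. c t \<in> L) \<and>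
            x = (\<Sum>t\<in>sec ` Yq L Z. t * c t)) \<and>
     (\<forall>y\<in>Yq L Z. (\<lambda>l. sec y * l) ` L = (\<lambda>l. l * sec y) ` L) \<and>
     (\<forall>y1\<in>Yq L Z. \<forall>y2\<in>Yq L Z.
        (\<lambda>l. sec y1 * sec y2 * l) ` L = (\<lambda>l. sec (ymul L Z sec y1 y2) * l) ` L)"

text \<open>A left Lambda'-module is an abelian group type 'v with an action act.
  Notions relative to a subring R (restriction to R) take R as a parameter.\<close>

definition lmodule :: "('a::ring_1 \<Rightarrow> 'v::ab_group_add \<Rightarrow> 'v) \<Rightarrow> bool" where
  "lmodule act \<longleftrightarrow> (\<forall>a x y. act a (x + y) = act a x + act a y) \<and>
     (\<forall>a b x. act (a + b) x = act a x + act b x) \<and>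
     (\<forall>a b x. act (a * b) x = act a (act b x)) \<and> (\<forall>x. act 1 x = x)"

definition submod :: "'a::ring_1 set \<Rightarrow> ('a \<Rightarrow> 'v::ab_group_add \<Rightarrow> 'v) \<Rightarrow> 'v set \<Rightarrow> bool" where
  "submod R act N \<longleftrightarrow> 0 \<in> N \<and> (\<forall>x\<in>N. \<forall>y\<in>N. x + y \<in> N) \<and> (\<forall>x\<in>N. - x \<in> N) \<and>
     (\<forall>a\<in>R. \<forall>x\<in>N. act a x \<in> N)"

definition simple_mod :: "'a::ring_1 set \<Rightarrow> ('a \<Rightarrow> 'v::ab_group_add \<Rightarrow> 'v) \<Rightarrow> bool" where
  "simple_mod R act \<longleftrightarrow> (UNIV :: 'v set) \<noteq> {0} \<and>
     (\<forall>N. submod R act N \<longrightarrow> N = {0} \<or> N = UNIV)"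

definition span_mod :: "'a::ring_1 set \<Rightarrow> ('a \<Rightarrow> 'v::ab_group_add \<Rightarrow> 'v) \<Rightarrow> 'v set \<Rightarrow> 'v set" where
  "span_mod R act S = \<Inter> {N. submod R act N \<and> S \<subseteq> N}"

definition fin_gen :: "'a::ring_1 set \<Rightarrow> ('a \<Rightarrow> 'v::ab_group_add \<Rightarrow> 'v) \<Rightarrow> bool" where
  "fin_gen R act \<longleftrightarrow> (\<exists>S. finite S \<and> span_mod R act S = UNIV)"

definition mod_hom_on :: "'a::ring_1 set \<Rightarrow> ('a \<Rightarrow> 'v::ab_group_add \<Rightarrow> 'v) \<Rightarrow>
    ('a \<Rightarrow> 'w::ab_group_add \<Rightarrow> 'w) \<Rightarrow> 'v set \<Rightarrow> ('v \<Rightarrow> 'w) \<Rightarrow> bool" where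
  "mod_hom_on R act act' N f \<longleftrightarrow> (\<forall>x\<in>N. \<forall>y\<in>N. f (x + y) = f x + f y) \<and>
     (\<forall>a\<in>R. \<forall>x\<in>N. f (act a x) = act' a (f x))"

text \<open>Composition series 0 = M_0 < M_1 < ... < M_n = V with simple subquotients
  (M_{i+1}/M_i simple iff there is no submodule strictly in between).\<close>
definition comp_series :: "'a::ring_1 set \<Rightarrow> ('a \<Rightarrow> 'v::ab_group_add \<Rightarrow> 'v) \<Rightarrow> 'v set list \<Rightarrow> bool" where
  "comp_series R act cs \<longleftrightarrow> cs \<noteq> [] \<and> hd cs = {0} \<and> last cs = UNIV \<and>
     (\<forall>i < length cs. submod R act (cs ! i)) \<and>
     (\<forall>i. Suc i < length cs \<longrightarrow> cs ! i \<subset> cs ! Suc i \<and>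
        (\<forall>N. submod R act N \<and> cs ! i \<subseteq> N \<and> N \<subseteq> cs ! Suc i \<longrightarrow> N = cs ! i \<or> N = cs ! Suc i))"

text \<open>B/A is isomorphic to the module (s, actS): there is a surjective homomorphism B -> s
  with kernel A.\<close>
definition factor_iso :: "'a::ring_1 set \<Rightarrow> ('a \<Rightarrow> 'v::ab_group_add \<Rightarrow> 'v) \<Rightarrow>
    ('a \<Rightarrow> 's::ab_group_add \<Rightarrow> 's) \<Rightarrow> 'v set \<Rightarrow> 'v set \<Rightarrow> bool" where
  "factor_iso R act actS A B \<longleftrightarrow>
     (\<exists>f. mod_hom_on R act actS B f \<and> f ` B = UNIV \<and> {x \<in> B. f x = 0} = A)"

definition jh_mult :: "'a::ring_1 set \<Rightarrow> ('a \<Rightarrow> 'v::ab_group_add \<Rightarrow> 'v) \<Rightarrow>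
    ('a \<Rightarrow> 's::ab_group_add \<Rightarrow> 's) \<Rightarrow> nat" where
  "jh_mult R act actS = (SOME n. \<exists>cs. comp_series R act cs \<and>
      n = card {i. Suc i < length cs \<and> factor_iso R act actS (cs ! i) (cs ! Suc i)})"

definition central_char :: "('f::field \<Rightarrow> 'a::ring_1) \<Rightarrow> 'a set \<Rightarrow> ('a \<Rightarrow> 'f) \<Rightarrow>
    ('a \<Rightarrow> 'v::ab_group_add \<Rightarrow> 'v) \<Rightarrow> bool" where
  "central_char \<iota> Z \<omega> act \<longleftrightarrow> (\<forall>z\<in>Z. \<omega> z \<noteq> 0) \<and>
     (\<forall>z1\<in>Z. \<forall>z2\<in>Z. \<omega> (z1 * z2) = \<omega> z1 * \<omega> z2) \<and>
     (\<forall>z\<in>Z. \<forall>v. act z v = act (\<iota> (\<omega> z)) v)"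

definition abs_simple :: "('f::field \<Rightarrow> 'a::ring_1) \<Rightarrow> ('a \<Rightarrow> 's::ab_group_add \<Rightarrow> 's) \<Rightarrow> bool" where
  "abs_simple \<iota> act \<longleftrightarrow> simple_mod UNIV act \<and>
     (\<forall>f. mod_hom_on UNIV act act UNIV f \<longrightarrow> (\<exists>c. \<forall>s. f s = act (\<iota> c) s))"

end

theory Submission
  imports Defs
begin

lemma submod_eq:
  assumes "\<forall>a. \<exists>l\<in>L. \<forall>v. act a v = act l v"
  shows "submod L act = submod UNIV act"
proof (rule ext)
  fix N
  show "submod L act N = submod UNIV act N"
  proof -
    have "(\<forall>a\<in>L. \<forall>x\<in>N. act a x \<in> N) \<longleftrightarrow> (\<forall>a. \<forall>x\<in>N. act a x \<in> N)"
    proof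
      assume h: "\<forall>a\<in>L. \<forall>x\<in>N. act a x \<in> N"
      show "\<forall>a. \<forall>x\<in>N. act a x \<in> N"
      proof (intro allI ballI)
        fix a x assume "x \<in> N"
        obtain l where "l \<in> L" "\<forall>v. act a v = act l v" using assms by blast
        then show "act a x \<in> N" using h \<open>x \<in> N\<close> by simp
      qed
    qed blast
    then show ?thesis unfolding submod_def by simp
  qed
qed

lemma hom_eq:
  assumes "\<forall>a. \<exists>l\<in>L. (\<forall>v. act a v = act l v) \<and> (\<forall>s. actS a s = actS l s)"
  shows "mod_hom_on L act actS = mod_hom_on UNIV act actS"
proof (intro ext)
  fix N f
  show "mod_hom_on L act actS N f = mod_hom_on UNIV act actS N f"
  proof -
    have "(\<forall>a\<in>L. \<forall>x\<in>N. f (act a x) = actS a (f x)) \<longleftrightarrow> (\<forall>a. \<forall>x\<in>N. f (act a x) = actS a (f x))"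
    proof
      assume h: "\<forall>a\<in>L. \<forall>x\<in>N. f (act a x) = actS a (f x)"
      show "\<forall>a. \<forall>x\<in>N. f (act a x) = actS a (f x)"
      proof (intro allI ballI)
        fix a x assume "x \<in> N"
        obtain l where "l \<in> L" "\<forall>v. act a v = act l v" "\<forall>s. actS a s = actS l s" using assms by blast
        then show "f (act a x) = actS a (f x)" using h \<open>x \<in> N\<close> by simp
      qed
    qed blast
    then show ?thesis unfolding mod_hom_on_def by simp
  qed
qed

lemma act_sum:
  assumes "lmodule act"
  shows "act (sum g T) v = (\<Sum>t\<in>T. act (g t) v)"
proof (cases "finite T")
  case True
  have z: "act 0 v = 0" for v
  proof -
    have "act (0+0) v = act 0 v + act 0 v" using assms unfolding lmodule_def by blast
    then show ?thesis by simp
  qed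
  from True show ?thesis
  proof (induction T rule: finite_induct)
    case empty then show ?case using z by simp
  next
    case (insert x F)
    then show ?case using assms unfolding lmodule_def by simp
  qed
next
  case False
  have "act (0+0) v = act 0 v + act 0 v" using assms unfolding lmodule_def by blast
  then show ?thesis using False by simp
qed

lemma L_sum:
  assumes "subalgebra \<iota> L" and "\<forall>t\<in>T. g t \<in> L"
  shows "sum g T \<in> L"
proof -
  have z: "0 \<in> L"
  proof -
    have "1 \<in> L" "-1 \<in> L" using assms(1) unfolding subalgebra_def by auto
    then have "1 + -1 \<in> L" using assms(1) unfolding subalgebra_def by blast
    then show ?thesis by simp
  qed
  show ?thesis
  proof (cases "finite T")
    case True
    from True assms(2) show ?thesis
    proof (induction T rule: finite_induct)
      case empty then show ?case using z by simp
    next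
      case (insert x F)
      then show ?case using assms(1) unfolding subalgebra_def by simp
    qed
  next
    case False then show ?thesis using z by simp
  qed
qed

lemma key:
  assumes sub: "subalgebra \<iota> L"
    and cu: "central_unit_subgroup Z"
    and cp: "crossed_product L Z sec"
    and m1: "lmodule act" and c1: "central_char \<iota> Z \<omega> act"
    and m2: "lmodule actS" and c2: "central_char \<iota> Z \<omega> actS"
  shows "\<forall>a. \<exists>l\<in>L. (\<forall>v. act a v = act l v) \<and> (\<forall>s. actS a s = actS l s)"
proof
  fix a
  let ?T = "sec ` Yq L Z"
  have TZ: "?T \<subseteq> Z"
  proof
    fix t assume "t \<in> ?T"
    then obtain y where y: "y \<in> Yq L Z" "t = sec y" by auto
    moreover have "\<forall>y\<in>Yq L Z. sec y \<in> y" using cp unfolding crossed_product_def by (rule conjunct1)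
    ultimately have "t \<in> y" by simp
    moreover from y obtain z where "z \<in> Z" "y = ycoset L Z z" unfolding Yq_def by auto
    ultimately obtain w where "w \<in> L \<inter> Z" "t = z * w" unfolding ycoset_def by auto
    moreover have "\<forall>z\<in>Z. \<forall>w\<in>Z. z * w \<in> Z" using cu unfolding central_unit_subgroup_def by blast
    ultimately show "t \<in> Z" using \<open>z \<in> Z\<close> by blast
  qed
  obtain c where c: "\<forall>t\<in>?T. c t \<in> L" "a = (\<Sum>t\<in>?T. c t * t)"
  proof -
    have "\<forall>x. \<exists>!c. (\<forall>t. t \<notin> ?T \<longrightarrow> c t = 0) \<and> (\<forall>t\<in>?T. c t \<in> L) \<and>
            x = (\<Sum>t\<in>?T. c t * t)"
      using cp unfolding crossed_product_def by (elim conjE)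
    then obtain c where "(\<forall>t. t \<notin> ?T \<longrightarrow> c t = 0) \<and> (\<forall>t\<in>?T. c t \<in> L) \<and>
            a = (\<Sum>t\<in>?T. c t * t)" by blast
    then show ?thesis using that by blast
  qed
  define l where "l = (\<Sum>t\<in>?T. c t * \<iota> (\<omega> t))"
  have "l \<in> L" unfolding l_def
    apply (rule L_sum[OF sub])
    apply (rule ballI)
  proof -
    fix t assume "t \<in> ?T"
    have i: "\<forall>c. \<iota> c \<in> L" and m: "\<forall>x\<in>L. \<forall>y\<in>L. x + y \<in> L \<and> x * y \<in> L"
      using sub unfolding subalgebra_def by blast+
    then show "c t * \<iota> (\<omega> t) \<in> L" using c(1) \<open>t \<in> ?T\<close> by blast
  qed
  moreover have "\<forall>v. act a v = act l v"
  proof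
    fix v
    have "act a v = (\<Sum>t\<in>?T. act (c t * t) v)" using c(2) act_sum[OF m1] by simp
    also have "\<dots> = (\<Sum>t\<in>?T. act (c t * \<iota> (\<omega> t)) v)"
      apply (rule sum.cong, simp)
    proof -
      fix t assume "t \<in> ?T"
      then have "t \<in> Z" using TZ by blast
      have mm: "\<forall>a b x. act (a * b) x = act a (act b x)" using m1 unfolding lmodule_def by blast
      have cc: "\<forall>z\<in>Z. \<forall>v. act z v = act (\<iota> (\<omega> z)) v" using c1 unfolding central_char_def by blast
      show "act (c t * t) v = act (c t * \<iota> (\<omega> t)) v"
        using mm cc \<open>t \<in> Z\<close> by simp
    qed
    also have "\<dots> = act l v" unfolding l_def by (rule act_sum[OF m1, symmetric])
    finally show "act a v = act l v" .
  qed
  moreover have "\<forall>v. actS a v = actS l v"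
  proof
    fix v
    have "actS a v = (\<Sum>t\<in>?T. actS (c t * t) v)" using c(2) act_sum[OF m2] by simp
    also have "\<dots> = (\<Sum>t\<in>?T. actS (c t * \<iota> (\<omega> t)) v)"
      apply (rule sum.cong, simp)
    proof -
      fix t assume "t \<in> ?T"
      then have "t \<in> Z" using TZ by blast
      have mm: "\<forall>a b x. actS (a * b) x = actS a (actS b x)" using m2 unfolding lmodule_def by blast
      have cc: "\<forall>z\<in>Z. \<forall>v. actS z v = actS (\<iota> (\<omega> z)) v" using c2 unfolding central_char_def by blast
      show "actS (c t * t) v = actS (c t * \<iota> (\<omega> t)) v"
        using mm cc \<open>t \<in> Z\<close> by simp
    qed
    also have "\<dots> = actS l v" unfolding l_def by (rule act_sum[OF m2, symmetric])
    finally show "actS a v = actS l v" .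
  qed
  ultimately show "\<exists>l\<in>L. (\<forall>v. act a v = act l v) \<and> (\<forall>s. actS a s = actS l s)" by blast
qed

theorem corollary5p5:
  fixes \<iota> :: "'f::field \<Rightarrow> 'a::ring_1"
    and L Z :: "'a set"
    and sec :: "'a set \<Rightarrow> 'a"
    and \<omega> :: "'a \<Rightarrow> 'f"
    and act :: "'a \<Rightarrow> 'v::ab_group_add \<Rightarrow> 'v"
    and actS :: "'a \<Rightarrow> 's::ab_group_add \<Rightarrow> 's"
  assumes "alg_embedding \<iota>"
    and "left_artinian TYPE('a)"
    and "subalgebra \<iota> L"
    and "central_unit_subgroup Z"
    and "\<not> CHAR('f) dvd card Z"
    and "crossed_product L Z sec"
    and "lmodule act" and "fin_gen UNIV act" and "central_char \<iota> Z \<omega> act"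
    and "lmodule actS" and "simple_mod UNIV actS" and "central_char \<iota> Z \<omega> actS"
    and "abs_simple \<iota> actS"
  shows "fin_gen L act \<and> simple_mod L actS \<and> jh_mult UNIV act actS = jh_mult L act actS"
proof -
  have k: "\<forall>a. \<exists>l\<in>L. (\<forall>v. act a v = act l v) \<and> (\<forall>s. actS a s = actS l s)"
    using key[OF assms(3,4,6,7,9,10,12)] .
  have s1: "submod L act = submod UNIV act" by (rule submod_eq) (use k in blast)
  have s2: "submod L actS = submod UNIV actS" by (rule submod_eq) (use k in blast)
  have h: "mod_hom_on L act actS = mod_hom_on UNIV act actS" by (rule hom_eq[OF k])
  have "fin_gen L act" using assms(8) unfolding fin_gen_def span_mod_def s1 .
  moreover have "simple_mod L actS" using assms(11) unfolding simple_mod_def s2 .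
  moreover have "jh_mult UNIV act actS = jh_mult L act actS"
    unfolding jh_mult_def comp_series_def factor_iso_def s1 h ..
  ultimately show ?thesis by blast
qed

end
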